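(* Let $n\geq1$ and $N=n(n+3)/2$. For real parameters $u_{ij}$ ($1\leq j\leq i\leq n$) and $v_1,\ldots,v_n$ (together $N$ parameters), let $Y_1$ be the lower triangular $n\times n$ matrix with $(i,j)$-entry $u_{ij}$ for $i\geq j$ and $0$ otherwise, and let $Y_2$ be the $n\times n$ matrix whose last column is $(v_1,\ldots,v_n)^\top$, whose $(i+1,i)$-entries are $-1$ for $1\leq i\leq n-1$, and all of whose other entries are $0$. Define $G:\mathbb{R}^N\to\mathbb{R}^N$ by sending the parameters to the vector of coefficients of the monomials $x_1^ax_2^bx_3^c$ ($a+b+c=n$, $c\neq n$) in $\det(x_1Y_1+x_2Y_2+x_3E_n)$. Then the Jacobian determinant of $G$ is not identically zero.
   Context: $E_n$ is the $n\times n$ identity matrix; $x_1,x_2,x_3$ are indeterminates. Note that the monomials $x_1^ax_2^bx_3^c$ with $a+b+c=n$, $c\ne n$, are exactly $N=n(n+3)/2$ in number. *)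

theory Defs
  imports Complex_Main "HOL-Computational_Algebra.Polynomial" "Jordan_Normal_Form.Determinant"
begin

(* Trivariate real polynomials rendered as nested univariate polynomials:
   outer variable x1, middle variable x2, inner variable x3. *)
type_synonym tripoly = "real poly poly poly"

definition X1 :: tripoly where "X1 = [:0, 1:]"
definition X2 :: tripoly where "X2 = [:[:0, 1:]:]"
definition X3 :: tripoly where "X3 = [:[:[:0, 1:]:]:]"
definition constP :: "real \<Rightarrow> tripoly" where "constP c = [:[:[:c:]:]:]"

definition tcoeff :: "tripoly \<Rightarrow> nat \<Rightarrow> nat \<Rightarrow> nat \<Rightarrow> real" where
  "tcoeff P a b c = coeff (coeff (coeff P a) b) c"

(* Parameters are coordinates w 0, ..., w (N-1) of w :: nat => real, 0-based indices:
   u_{ij} (0 <= j <= i < n) is w (i*(i+1) div 2 + j);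
   v_i (0 <= i < n) is w (n*(n+1) div 2 + i). *)
definition numParams :: "nat \<Rightarrow> nat" where "numParams n = n * (n + 3) div 2"

definition Y1 :: "nat \<Rightarrow> (nat \<Rightarrow> real) \<Rightarrow> real mat" where
  "Y1 n w = mat n n (\<lambda>(i, j). if j \<le> i then w (i * (i + 1) div 2 + j) else 0)"

definition Y2 :: "nat \<Rightarrow> (nat \<Rightarrow> real) \<Rightarrow> real mat" where
  "Y2 n w = mat n n (\<lambda>(i, j). if j = n - 1 then w (n * (n + 1) div 2 + i)
                               else if i = j + 1 then -1 else 0)"

definition pencil :: "nat \<Rightarrow> (nat \<Rightarrow> real) \<Rightarrow> tripoly mat" where
  "pencil n w = mat n n (\<lambda>(i, j). X1 * constP (Y1 n w $$ (i, j)) + X2 * constP (Y2 n w $$ (i, j))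
                                  + X3 * (if i = j then 1 else 0))"

definition monoms :: "nat \<Rightarrow> (nat \<times> nat \<times> nat) list" where
  "monoms n = filter (\<lambda>(a, b, c). c \<noteq> n)
     (concat (map (\<lambda>a. map (\<lambda>b. (a, b, n - a - b)) [0..<Suc (n - a)]) [0..<Suc n]))"

definition Gmap :: "nat \<Rightarrow> (nat \<Rightarrow> real) \<Rightarrow> nat \<Rightarrow> real" where
  "Gmap n w r = (case monoms n ! r of (a, b, c) \<Rightarrow> tcoeff (det (pencil n w)) a b c)"

definition rderiv :: "(real \<Rightarrow> real) \<Rightarrow> real \<Rightarrow> real" where
  "rderiv f x = (SOME D. (f has_real_derivative D) (at x))"

definition jacobian :: "nat \<Rightarrow> (nat \<Rightarrow> real) \<Rightarrow> real mat" where
  "jacobian n w = mat (numParams n) (numParams n)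
     (\<lambda>(r, k). rderiv (\<lambda>t. Gmap n (w(k := t)) r) (w k))"

end

theory Submission
  imports Defs
begin


lemma tcoeff_add[simp]: "tcoeff (P + Q) a b c = tcoeff P a b c + tcoeff Q a b c"
  by (simp add: tcoeff_def)
lemma tcoeff_sum: "tcoeff (sum f S) a b c = (\<Sum>x\<in>S. tcoeff (f x) a b c)"
  by (induct S rule: infinite_finite_induct) (auto simp: tcoeff_def)
lemma tcoeff_constP_mult[simp]: "tcoeff (constP t * P) a b c = t * tcoeff P a b c"
  by (simp add: tcoeff_def constP_def)
lemma tcoeff_X1_mult0: "tcoeff (X1 * P) 0 b c = 0"
  by (simp add: tcoeff_def X1_def)
lemma tcoeff_X2_mult0: "tcoeff (X2 * P) a 0 c = 0"
  by (simp add: tcoeff_def X2_def)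

lemma tcoeff_mult: "tcoeff (P * Q) a b c =
  (\<Sum>i\<le>a. \<Sum>j\<le>b. \<Sum>k\<le>c. tcoeff P i j k * tcoeff Q (a-i) (b-j) (c-k))"
  by (simp add: tcoeff_def coeff_mult coeff_sum)

definition homog :: "nat \<Rightarrow> tripoly \<Rightarrow> bool" where
  "homog d P \<longleftrightarrow> (\<forall>a b c. tcoeff P a b c \<noteq> 0 \<longrightarrow> a + b + c = d)"

lemma homog_0[simp]: "homog d 0" by (simp add: homog_def tcoeff_def)
lemma homog_add: "homog d P \<Longrightarrow> homog d Q \<Longrightarrow> homog d (P + Q)"
  unfolding homog_def by (metis add.left_neutral tcoeff_add)
lemma homog_uminus: "homog d P \<Longrightarrow> homog d (- P)"
  by (auto simp: homog_def tcoeff_def)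
lemma homog_sum: "(\<And>x. x \<in> S \<Longrightarrow> homog d (f x)) \<Longrightarrow> homog d (sum f S)"
  by (induct S rule: infinite_finite_induct) (auto intro: homog_add)
lemma homog_mult: assumes "homog d P" "homog e Q" shows "homog (d + e) (P * Q)"
  unfolding homog_def
proof (intro allI impI)
  fix a b c assume "tcoeff (P * Q) a b c \<noteq> 0"
  then obtain i j k where ijk: "i \<le> a" "j \<le> b" "k \<le> c"
    "tcoeff P i j k * tcoeff Q (a-i) (b-j) (c-k) \<noteq> 0"
    unfolding tcoeff_mult by (metis (no_types, lifting) atMost_iff sum.neutral)
  have "i + j + k = d" using assms(1) ijk(4) unfolding homog_def by (metis mult_zero_left)
  moreover have "(a-i) + (b-j) + (c-k) = e" using assms(2) ijk(4) unfolding homog_def by (metis mult_zero_right)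
  ultimately show "a + b + c = d + e" using ijk by arith
qed
lemma homog_one[simp]: "homog 0 1" by (simp add: homog_def tcoeff_def coeff_1)
lemma homog_X1[simp]: "homog 1 X1" by (simp add: homog_def tcoeff_def X1_def coeff_pCons split: nat.splits)
lemma homog_X2[simp]: "homog 1 X2" by (simp add: homog_def tcoeff_def X2_def coeff_pCons split: nat.splits)
lemma homog_X3[simp]: "homog 1 X3" by (simp add: homog_def tcoeff_def X3_def coeff_pCons split: nat.splits)
lemma homog_constP[simp]: "homog 0 (constP t)" by (simp add: homog_def tcoeff_def constP_def coeff_pCons split: nat.splits)
lemma homog_prod: "finite S \<Longrightarrow> (\<And>x. x \<in> S \<Longrightarrow> homog 1 (f x)) \<Longrightarrow> homog (card S) (prod f S)"
proof (induct S rule: finite_induct)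
  case empty thus ?case by simp
next
  case (insert x F)
  thus ?case using homog_mult[of 1 "f x" "card F" "prod f F"] by simp
qed

lemma homog_signof: "homog 0 (signof p :: tripoly)"
  by (simp add: sign_def homog_uminus)

lemma homog_det: assumes A: "A \<in> carrier_mat m m" and h: "\<And>i j. i < m \<Longrightarrow> j < m \<Longrightarrow> homog 1 (A $$ (i,j))"
  shows "homog m (det A)"
proof -
  have "homog m (\<Sum>p\<in>{p. p permutes {0..<m}}. signof p * (\<Prod>i = 0..<m. A $$ (i, p i)))"
  proof (rule homog_sum)
    fix p assume "p \<in> {p. p permutes {0..<m}}"
    hence "\<And>i. i < m \<Longrightarrow> p i < m" by (auto dest: permutes_in_image)
    hence "homog (card {0..<m}) (\<Prod>i = 0..<m. A $$ (i, p i))" using h by (intro homog_prod) auto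
    from homog_mult[OF homog_signof this] show "homog m (signof p * (\<Prod>i = 0..<m. A $$ (i, p i)))" by simp
  qed
  thus ?thesis using det_def'[OF A] by simp
qed

lemma tripoly_eqI: "(\<And>a b c. tcoeff P a b c = tcoeff Q a b c) \<Longrightarrow> P = Q"
  unfolding tcoeff_def by (intro poly_eqI) blast

definition ev :: "real \<Rightarrow> real \<Rightarrow> real \<Rightarrow> tripoly \<Rightarrow> real" where
  "ev x1 x2 x3 P = poly (poly (poly P [:[:x1:]:]) [:x2:]) x3"

interpretation ev_hom: comm_ring_hom "ev x1 x2 x3"
  by unfold_locales (auto simp: ev_def)

lemma ev_X1[simp]: "ev x1 x2 x3 X1 = x1" by (simp add: ev_def X1_def)
lemma ev_X2[simp]: "ev x1 x2 x3 X2 = x2" by (simp add: ev_def X2_def)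
lemma ev_X3[simp]: "ev x1 x2 x3 X3 = x3" by (simp add: ev_def X3_def)
lemma ev_constP[simp]: "ev x1 x2 x3 (constP c) = c" by (simp add: ev_def constP_def)



lemma det_one_entry:
  fixes A A' :: "'a :: comm_ring_1 mat"
  assumes A: "A \<in> carrier_mat n n" and A': "A' \<in> carrier_mat n n" and i: "i < n" and j: "j < n"
    and eq: "\<And>i' j'. i' < n \<Longrightarrow> j' < n \<Longrightarrow> (i', j') \<noteq> (i, j) \<Longrightarrow> A' $$ (i',j') = A $$ (i',j')"
  shows "det A' = det A + (A' $$ (i,j) - A $$ (i,j)) * cofactor A i j"
proof -
  have cof: "cofactor A' i k = cofactor A i k" if "k < n" for k
  proof -
    have "mat_delete A' i k = mat_delete A i k"
    proof (rule eq_matI)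
      fix a b assume a: "a < dim_row (mat_delete A i k)" and b: "b < dim_col (mat_delete A i k)"
      have an: "a < n - 1" "b < n - 1" using a b A by auto
      define r where "r = (if a < i then a else Suc a)"
      define c where "c = (if b < k then b else Suc b)"
      have rc: "r < n" "c < n" "r \<noteq> i" using an unfolding r_def c_def by auto
      have "mat_delete A' i k $$ (a,b) = A' $$ (r, c)" using an A' unfolding mat_delete_def r_def c_def by simp
      also have "\<dots> = A $$ (r, c)" using eq[of r c] rc by auto
      also have "\<dots> = mat_delete A i k $$ (a,b)" using an A unfolding mat_delete_def r_def c_def by simp
      finally show "mat_delete A' i k $$ (a,b) = mat_delete A i k $$ (a,b)" .
    qed (use A A' in auto)
    thus ?thesis unfolding cofactor_def by simp
  qed
  define D where "D = A' $$ (i,j) - A $$ (i,j)"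
  have row: "A' $$ (i,k) = A $$ (i,k) + (if k = j then D else 0)" if "k < n" for k
    using eq[of i k] i that unfolding D_def by auto
  have "det A' = (\<Sum>k<n. A' $$ (i,k) * cofactor A' i k)" by (rule laplace_expansion_row[OF A' i])
  also have "\<dots> = (\<Sum>k<n. A $$ (i,k) * cofactor A i k + (if k = j then D * cofactor A i j else 0))"
    by (rule sum.cong) (auto simp: cof row distrib_right)
  also have "\<dots> = det A + D * cofactor A i j"
    using j by (simp add: sum.distrib laplace_expansion_row[OF A i])
  finally show ?thesis unfolding D_def .
qed

definition tri :: "nat \<Rightarrow> nat \<Rightarrow> nat" where "tri i j = i * (i + 1) div 2 + j"

lemma tri_Suc: "Suc i * (Suc i + 1) div 2 = i * (i + 1) div 2 + Suc i"
  by (induct i) auto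

lemma tri_less: "j \<le> i \<Longrightarrow> i < n \<Longrightarrow> tri i j < n * (n + 1) div 2"
proof (induct n)
  case 0 thus ?case by simp
next
  case (Suc n)
  show ?case
  proof (cases "i = n")
    case True thus ?thesis using Suc.prems tri_Suc[of n] by (simp add: tri_def)
  next
    case False thus ?thesis using Suc tri_Suc[of n] by simp
  qed
qed

lemma tri_inj: assumes "j \<le> i" "j' \<le> i'" "tri i j = tri i' j'" shows "i = i' \<and> j = j'"
proof -
  have *: "tri a b < tri a' b'" if "b \<le> a" "b' \<le> a'" "a < a'" for a b a' b'
  proof -
    have "tri a b < a' * (a' + 1) div 2" using tri_less[OF that(1), of a'] that by simp
    thus ?thesis by (simp add: tri_def)
  qed
  have "i = i'" using *[OF assms(1,2)] *[OF assms(2,1)] assms(3) by (metis less_irrefl nat_neq_iff)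
  thus ?thesis using assms by (simp add: tri_def)
qed

lemma sum_split_add: "(\<Sum>k < T + (m::nat). f k) = (\<Sum>k < T. f k) + (\<Sum>j < m. f (T + j))"
  by (induct m) (auto simp: add_ac)

lemma sum_tri: "(\<Sum>k < n * (n + 1) div 2. f k) = (\<Sum>i<n. \<Sum>j\<le>i. f (tri i j))"
proof (induct n)
  case 0 thus ?case by simp
next
  case (Suc n)
  have "(\<Sum>k < Suc n * (Suc n + 1) div 2. f k) = (\<Sum>k < n * (n + 1) div 2 + Suc n. f k)"
    by (simp only: tri_Suc)
  also have "\<dots> = (\<Sum>k < n * (n + 1) div 2. f k) + (\<Sum>j < Suc n. f (n * (n + 1) div 2 + j))"
    by (rule sum_split_add)
  also have "(\<Sum>j < Suc n. f (n * (n + 1) div 2 + j)) = (\<Sum>j\<le>n. f (tri n j))"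
    by (simp add: tri_def lessThan_Suc_atMost)
  finally show ?case using Suc by simp
qed



abbreviation base :: "nat \<Rightarrow> nat" where "base n \<equiv> n * (n + 1) div 2"

lemma pencil_carrier[simp]: "pencil n w \<in> carrier_mat n n"
  by (simp add: pencil_def)

lemma pencil_index: "i < n \<Longrightarrow> j < n \<Longrightarrow> pencil n w $$ (i,j) =
   X1 * constP (if j \<le> i then w (tri i j) else 0) +
   X2 * constP (if j = n - 1 then w (base n + i) else if i = j + 1 then -1 else 0) +
   X3 * (if i = j then 1 else 0)"
  by (simp add: pencil_def Y1_def Y2_def tri_def)

lemma constP_0[simp]: "constP 0 = 0" by (simp add: constP_def)

lemma constP_diff: "constP a - constP b = constP (a - b)" by (simp add: constP_def)

lemma pencil_diff: "i < n \<Longrightarrow> j < n \<Longrightarrow> pencil n w' $$ (i,j) - pencil n w $$ (i,j) =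
   X1 * constP (if j \<le> i then w' (tri i j) - w (tri i j) else 0) +
   X2 * constP (if j = n - 1 then w' (base n + i) - w (base n + i) else 0)"
  by (simp add: pencil_index algebra_simps constP_diff[symmetric])

lemma pencil_same: "i < n \<Longrightarrow> j < n \<Longrightarrow> (j \<le> i \<Longrightarrow> w' (tri i j) = w (tri i j)) \<Longrightarrow>
   (j = n - 1 \<Longrightarrow> w' (base n + i) = w (base n + i)) \<Longrightarrow> pencil n w' $$ (i,j) = pencil n w $$ (i,j)"
  using pencil_diff[of i n j w' w] by (cases "j \<le> i"; cases "j = n - 1") (simp_all add: constP_def)

lemma det_pencil_u:
  assumes "j \<le> i" "i < n"
  shows "det (pencil n (w(tri i j := t))) = det (pencil n w) + constP (t - w (tri i j)) * (X1 * cofactor (pencil n w) i j)"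
proof -
  have jn: "j < n" using assms by simp
  have tl: "tri i j < base n" using tri_less[OF assms] .
  have eq: "pencil n (w(tri i j := t)) $$ (i',j') = pencil n w $$ (i',j')"
    if "i' < n" "j' < n" "(i',j') \<noteq> (i,j)" for i' j'
  proof (rule pencil_same[OF that(1,2)])
    show "(w(tri i j := t)) (tri i' j') = w (tri i' j')" if "j' \<le> i'"
      using tri_inj[of j' i' j i] that \<open>(i',j') \<noteq> (i,j)\<close> assms by auto
    show "(w(tri i j := t)) (base n + i') = w (base n + i')" using tl by simp
  qed
  have "det (pencil n (w(tri i j := t))) = det (pencil n w) +
     (pencil n (w(tri i j := t)) $$ (i,j) - pencil n w $$ (i,j)) * cofactor (pencil n w) i j"
    by (rule det_one_entry[OF pencil_carrier pencil_carrier assms(2) jn eq])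
  also have "pencil n (w(tri i j := t)) $$ (i,j) - pencil n w $$ (i,j) = X1 * constP (t - w (tri i j))"
  proof -
    have e1: "(if j \<le> i then (w(tri i j := t)) (tri i j) - w (tri i j) else 0) = t - w (tri i j)"
      using assms(1) by simp
    have ne: "base n + i \<noteq> tri i j" using tl by simp
    have e2': "(w(tri i j := t)) (base n + i) = w (base n + i)" using ne by (metis fun_upd_other)
    have e2: "(if j = n - 1 then (w(tri i j := t)) (base n + i) - w (base n + i) else 0) = 0"
      unfolding e2' by simp
    show ?thesis unfolding pencil_diff[OF assms(2) jn] e1 e2 by simp
  qed
  finally show ?thesis by (simp only: mult.commute mult.left_commute mult.assoc)
qed

lemma det_pencil_v:
  assumes "i < n"
  shows "det (pencil n (w(base n + i := t))) = det (pencil n w) + constP (t - w (base n + i)) * (X2 * cofactor (pencil n w) i (n - 1))"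
proof -
  have jn: "n - 1 < n" using assms by simp
  have eq: "pencil n (w(base n + i := t)) $$ (i',j') = pencil n w $$ (i',j')"
    if "i' < n" "j' < n" "(i',j') \<noteq> (i,n-1)" for i' j'
  proof (rule pencil_same[OF that(1,2)])
    show "(w(base n + i := t)) (tri i' j') = w (tri i' j')" if "j' \<le> i'"
      using tri_less[of j' i' n] that \<open>i' < n\<close> by auto
    show "(w(base n + i := t)) (base n + i') = w (base n + i')" if "j' = n - 1"
      using that \<open>(i',j') \<noteq> (i,n-1)\<close> by auto
  qed
  have "det (pencil n (w(base n + i := t))) = det (pencil n w) +
     (pencil n (w(base n + i := t)) $$ (i,n-1) - pencil n w $$ (i,n-1)) * cofactor (pencil n w) i (n-1)"
    by (rule det_one_entry[OF pencil_carrier pencil_carrier assms jn eq])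
  also have "pencil n (w(base n + i := t)) $$ (i,n-1) - pencil n w $$ (i,n-1) = X2 * constP (t - w (base n + i))"
  proof -
    have e1: "(if n - 1 \<le> i then (w(base n + i := t)) (tri i (n-1)) - w (tri i (n-1)) else 0) = 0"
      using tri_less[of "n-1" i n] assms by auto
    have e2: "(if n - 1 = n - 1 then (w(base n + i := t)) (base n + i) - w (base n + i) else 0) = t - w (base n + i)"
      by simp
    show ?thesis unfolding pencil_diff[OF assms jn] e1 e2 by simp
  qed
  finally show ?thesis by (simp only: mult.commute mult.left_commute mult.assoc)
qed

lemma rderiv_affine: "rderiv (\<lambda>t. \<alpha> + (t - x0) * \<beta>) y = \<beta>"
proof -
  have d: "((\<lambda>t. \<alpha> + (t - x0) * \<beta>) has_real_derivative \<beta>) (at y)"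
    by (auto intro!: derivative_eq_intros)
  show ?thesis unfolding rderiv_def
  proof (rule some_equality)
    show "((\<lambda>t. \<alpha> + (t - x0) * \<beta>) has_real_derivative \<beta>) (at y)" by (rule d)
  next
    fix D assume "((\<lambda>t. \<alpha> + (t - x0) * \<beta>) has_real_derivative D) (at y)"
    thus "D = \<beta>" using DERIV_unique d by blast
  qed
qed

definition Du :: "nat \<Rightarrow> (nat \<Rightarrow> real) \<Rightarrow> nat \<Rightarrow> nat \<Rightarrow> tripoly" where
  "Du n w i j = X1 * cofactor (pencil n w) i j"
definition Dv :: "nat \<Rightarrow> (nat \<Rightarrow> real) \<Rightarrow> nat \<Rightarrow> tripoly" where
  "Dv n w i = X2 * cofactor (pencil n w) i (n - 1)"

lemma numParams_eq: "numParams n = base n + n"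
proof -
  have "n * (n + 3) = n * (n + 1) + 2 * n" by (simp add: algebra_simps)
  thus ?thesis unfolding numParams_def by simp
qed

definition mcoeff :: "tripoly \<Rightarrow> nat \<times> nat \<times> nat \<Rightarrow> real" where
  "mcoeff P m = (case m of (a,b,c) \<Rightarrow> tcoeff P a b c)"

lemma jac_u: assumes "j \<le> i" "i < n" "r < numParams n"
  shows "jacobian n w $$ (r, tri i j) = mcoeff (Du n w i j) (monoms n ! r)"
proof -
  have k: "tri i j < numParams n" using tri_less[OF assms(1,2)] numParams_eq[of n] by simp
  have "jacobian n w $$ (r, tri i j) = rderiv (\<lambda>t. Gmap n (w(tri i j := t)) r) (w (tri i j))"
    using k assms by (simp add: jacobian_def)
  also have "(\<lambda>t. Gmap n (w(tri i j := t)) r) = (\<lambda>t. Gmap n w r + (t - w (tri i j)) * mcoeff (Du n w i j) (monoms n ! r))"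
    by (rule ext) (simp only: Gmap_def det_pencil_u[OF assms(1,2)] Du_def mcoeff_def, simp split: prod.splits)
  finally show ?thesis by (simp add: rderiv_affine)
qed

lemma jac_v: assumes "i < n" "r < numParams n"
  shows "jacobian n w $$ (r, base n + i) = mcoeff (Dv n w i) (monoms n ! r)"
proof -
  have k: "base n + i < numParams n" using assms numParams_eq[of n] by simp
  have "jacobian n w $$ (r, base n + i) = rderiv (\<lambda>t. Gmap n (w(base n + i := t)) r) (w (base n + i))"
    using k assms by (simp add: jacobian_def)
  also have "(\<lambda>t. Gmap n (w(base n + i := t)) r) = (\<lambda>t. Gmap n w r + (t - w (base n + i)) * mcoeff (Dv n w i) (monoms n ! r))"
    by (rule ext) (simp only: Gmap_def det_pencil_v[OF assms(1)] Dv_def mcoeff_def, simp split: prod.splits)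
  finally show ?thesis by (simp add: rderiv_affine)
qed



definition ell :: "real \<Rightarrow> real \<Rightarrow> nat \<Rightarrow> real" where "ell x1 x3 k = x1 * (real k + 1) + x3"
definition Linv :: "real \<Rightarrow> real \<Rightarrow> real \<Rightarrow> nat \<Rightarrow> nat \<Rightarrow> real" where
  "Linv x1 x2 x3 i j = (if j \<le> i then x2 ^ (i - j) / (\<Prod>k\<in>{j..i}. ell x1 x3 k) else 0)"
definition qv :: "real \<Rightarrow> real \<Rightarrow> real \<Rightarrow> nat \<Rightarrow> real" where
  "qv x1 x2 x3 i = (\<Sum>m\<le>i. Linv x1 x2 x3 i m)"

lemma Linv_rec:
  assumes "ell x1 x3 i \<noteq> 0"
  shows "ell x1 x3 i * Linv x1 x2 x3 i j - x2 * (if i \<ge> 1 then Linv x1 x2 x3 (i - 1) j else 0) = (if i = j then 1 else 0)"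
proof (cases "j \<le> i")
  case False thus ?thesis by (auto simp: Linv_def)
next
  case True
  show ?thesis
  proof (cases "j = i")
    case True thus ?thesis using assms by (auto simp: Linv_def)
  next
    case False
    with \<open>j \<le> i\<close> obtain i' where i': "i = Suc i'" "j \<le> i'" by (cases i) auto
    have "{j..Suc i'} = insert (Suc i') {j..i'}" using i' by auto
    hence P: "(\<Prod>k\<in>{j..i}. ell x1 x3 k) = ell x1 x3 i * (\<Prod>k\<in>{j..i'}. ell x1 x3 k)" using i' by simp
    have E: "x2 ^ (i - j) = x2 * x2 ^ (i' - j)" using i' by (simp add: Suc_diff_le)
    show ?thesis using assms False i' unfolding Linv_def P E by simp
  qed
qed

lemma qv_rec:
  assumes "ell x1 x3 i \<noteq> 0"
  shows "ell x1 x3 i * qv x1 x2 x3 i - x2 * (if i \<ge> 1 then qv x1 x2 x3 (i - 1) else 0) = 1"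
proof -
  have "x2 * (if i \<ge> 1 then qv x1 x2 x3 (i - 1) else 0) = (\<Sum>m\<le>i. x2 * (if i \<ge> 1 then Linv x1 x2 x3 (i - 1) m else 0))"
  proof (cases i)
    case 0 thus ?thesis by simp
  next
    case (Suc i')
    have "Linv x1 x2 x3 i' (Suc i') = 0" by (simp add: Linv_def)
    thus ?thesis using Suc by (simp add: qv_def sum_distrib_left)
  qed
  hence "ell x1 x3 i * qv x1 x2 x3 i - x2 * (if i \<ge> 1 then qv x1 x2 x3 (i - 1) else 0)
     = (\<Sum>m\<le>i. ell x1 x3 i * Linv x1 x2 x3 i m - x2 * (if i \<ge> 1 then Linv x1 x2 x3 (i - 1) m else 0))"
    by (simp add: qv_def sum_distrib_left sum_subtractf)
  also have "\<dots> = (\<Sum>m\<le>i. if i = m then 1 else 0)" using Linv_rec[OF assms] by simp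
  also have "\<dots> = 1" by simp
  finally show ?thesis .
qed



definition sig :: "nat \<Rightarrow> real \<Rightarrow> real \<Rightarrow> real \<Rightarrow> real" where
  "sig n x1 x2 x3 = 1 + x2 * qv x1 x2 x3 (n - 1)"
definition Am :: "nat \<Rightarrow> real \<Rightarrow> real \<Rightarrow> real \<Rightarrow> real mat" where
  "Am n x1 x2 x3 = mat n n (\<lambda>(i,j). (if i = j then ell x1 x3 i else 0) +
      x2 * (if j = n - 1 then 1 else if i = j + 1 then -1 else 0))"
definition Bm :: "nat \<Rightarrow> real \<Rightarrow> real \<Rightarrow> real \<Rightarrow> real mat" where
  "Bm n x1 x2 x3 = mat n n (\<lambda>(i,j). Linv x1 x2 x3 i j - x2 * qv x1 x2 x3 i * Linv x1 x2 x3 (n - 1) j / sig n x1 x2 x3)"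

lemma Am_Bm:
  assumes n: "n \<ge> 1" and l: "\<And>k. k < n \<Longrightarrow> ell x1 x3 k \<noteq> 0" and s: "sig n x1 x2 x3 \<noteq> 0"
  shows "Am n x1 x2 x3 * Bm n x1 x2 x3 = 1\<^sub>m n"
proof (rule eq_matI)
  fix i j assume "i < dim_row (1\<^sub>m n)" "j < dim_col (1\<^sub>m n)"
  hence i: "i < n" and j: "j < n" by auto
  let ?L = "Linv x1 x2 x3" and ?q = "qv x1 x2 x3" and ?s = "sig n x1 x2 x3" and ?e = "ell x1 x3"
  define b where "b k = ?L k j - x2 * ?q k * ?L (n - 1) j / ?s" for k
  have Aik: "Am n x1 x2 x3 $$ (i,k) = (if k = i then ?e i else 0) + (if k = n - 1 then x2 else 0)
      - (if i \<ge> 1 \<and> k = i - 1 then x2 else 0)" if "k < n" for k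
    using that i by (auto simp: Am_def)
  have "(Am n x1 x2 x3 * Bm n x1 x2 x3) $$ (i,j) = (\<Sum>k<n. Am n x1 x2 x3 $$ (i,k) * b k)"
    using i j by (simp add: Am_def Bm_def scalar_prod_def b_def atLeast0LessThan[symmetric])
  also have "\<dots> = (\<Sum>k<n. (if k = i then ?e i * b k else 0) + (if k = n - 1 then x2 * b k else 0)
      - (if i \<ge> 1 \<and> k = i - 1 then x2 * b k else 0))"
    by (rule sum.cong) (auto simp: Aik algebra_simps)
  also have "\<dots> = ?e i * b i + x2 * b (n - 1) - (if i \<ge> 1 then x2 * b (i - 1) else 0)"
    using i n by (simp add: sum_subtractf sum.distrib; arith)
  also have "\<dots> = (?e i * ?L i j - x2 * (if i \<ge> 1 then ?L (i - 1) j else 0))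
      - x2 * ?L (n - 1) j / ?s * (?e i * ?q i - x2 * (if i \<ge> 1 then ?q (i - 1) else 0))
      + x2 * ?L (n - 1) j * (1 - x2 * ?q (n - 1) / ?s)"
    unfolding b_def by (simp add: algebra_simps)
  also have "\<dots> = (if i = j then 1 else 0) - x2 * ?L (n - 1) j / ?s
      + x2 * ?L (n - 1) j * (1 - x2 * ?q (n - 1) / ?s)"
    unfolding Linv_rec[OF l[OF i]] qv_rec[OF l[OF i]] by simp
  also have "\<dots> = (if i = j then 1 else 0)"
  proof -
    have "1 - x2 * ?q (n - 1) / ?s = 1 / ?s" using s unfolding sig_def by (simp add: field_simps)
    thus ?thesis by simp
  qed
  finally show "(Am n x1 x2 x3 * Bm n x1 x2 x3) $$ (i,j) = 1\<^sub>m n $$ (i,j)" using i j by simp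
qed (auto simp: Am_def Bm_def)

lemma Am_carrier[simp]: "Am n x1 x2 x3 \<in> carrier_mat n n" by (simp add: Am_def)
lemma Am_dim[simp]: "dim_row (Am n x1 x2 x3) = n" "dim_col (Am n x1 x2 x3) = n" by (simp_all add: Am_def)
lemma Bm_dim[simp]: "dim_row (Bm n x1 x2 x3) = n" "dim_col (Bm n x1 x2 x3) = n" by (simp_all add: Bm_def)
lemma Bm_carrier[simp]: "Bm n x1 x2 x3 \<in> carrier_mat n n" by (simp add: Bm_def)

lemma cofactor_Am:
  assumes n: "n \<ge> 1" and l: "\<And>k. k < n \<Longrightarrow> ell x1 x3 k \<noteq> 0" and s: "sig n x1 x2 x3 \<noteq> 0"
    and i: "i < n" and j: "j < n"
  shows "cofactor (Am n x1 x2 x3) i j = det (Am n x1 x2 x3) * Bm n x1 x2 x3 $$ (j, i)"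
    and "det (Am n x1 x2 x3) \<noteq> 0"
proof -
  let ?A = "Am n x1 x2 x3" and ?B = "Bm n x1 x2 x3"
  have AB: "?A * ?B = 1\<^sub>m n" by (rule Am_Bm[OF n l s])
  have "adj_mat ?A = adj_mat ?A * (?A * ?B)" by (simp add: AB right_mult_one_mat[OF adj_mat(1)[OF Am_carrier]])
  also have "\<dots> = (adj_mat ?A * ?A) * ?B"
    by (rule assoc_mult_mat[symmetric, OF adj_mat(1)[OF Am_carrier] Am_carrier Bm_carrier])
  also have "\<dots> = det ?A \<cdot>\<^sub>m ?B" unfolding adj_mat(3)[OF Am_carrier]
    using mult_smult_assoc_mat[OF one_carrier_mat[of n] Bm_carrier[of n x1 x2 x3]]
      left_mult_one_mat[OF Bm_carrier[of n x1 x2 x3]] by simp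
  finally have adj: "adj_mat ?A = det ?A \<cdot>\<^sub>m ?B" .
  have "cofactor ?A i j = adj_mat ?A $$ (j, i)" using i j Am_carrier[of n x1 x2 x3] by (simp add: adj_mat_def)
  also have "\<dots> = det ?A * ?B $$ (j, i)" unfolding adj using i j by simp
  finally show "cofactor ?A i j = det ?A * ?B $$ (j, i)" .
  have "det ?A * det ?B = 1" using det_mult[OF Am_carrier[of n x1 x2 x3] Bm_carrier[of n x1 x2 x3]] AB by simp
  thus "det ?A \<noteq> 0" by auto
qed



lemma poly_zero_of_pos: fixes p :: "real poly" assumes "\<And>t. t > 0 \<Longrightarrow> poly p t = 0" shows "p = 0"
proof (rule ccontr)
  assume "p \<noteq> 0"
  hence "finite {x. poly p x = 0}" by (rule poly_roots_finite)
  moreover have "{0<..} \<subseteq> {x. poly p x = 0}" using assms by auto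
  ultimately have "finite {(0::real)<..}" by (rule finite_subset[rotated])
  thus False using infinite_Ioi by blast
qed

lemma pf1: fixes c :: "nat \<Rightarrow> real"
  assumes h: "\<And>t. t > 0 \<Longrightarrow> (\<Sum>i<n. c i / (real i + 1 + t)) = 0" and i0: "i0 < n"
  shows "c i0 = 0"
proof -
  define p where "p = (\<Sum>i<n. smult (c i) (\<Prod>k\<in>{..<n} - {i}. [:real k + 1, 1:]))"
  have pp: "poly p t = (\<Sum>i<n. c i * (\<Prod>k\<in>{..<n} - {i}. real k + 1 + t))" for t
    unfolding p_def by (simp add: poly_sum poly_prod add.commute)
  have "poly p t = 0" if t: "t > 0" for t
  proof -
    have nz: "real k + 1 + t \<noteq> 0" for k using t by (simp add: add_pos_pos)
    have "poly p t = (\<Sum>i<n. c i / (real i + 1 + t) * (\<Prod>k<n. real k + 1 + t))"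
      unfolding pp
    proof (rule sum.cong[OF refl])
      fix i assume "i \<in> {..<n}"
      hence "(\<Prod>k<n. real k + 1 + t) = (real i + 1 + t) * (\<Prod>k\<in>{..<n} - {i}. real k + 1 + t)"
        by (simp add: prod.remove)
      thus "c i * (\<Prod>k\<in>{..<n} - {i}. real k + 1 + t) = c i / (real i + 1 + t) * (\<Prod>k<n. real k + 1 + t)"
        using nz[of i] by simp
    qed
    also have "\<dots> = (\<Sum>i<n. c i / (real i + 1 + t)) * (\<Prod>k<n. real k + 1 + t)"
      by (simp add: sum_distrib_right)
    finally show ?thesis using h[OF t] by simp
  qed
  hence p0: "p = 0" by (rule poly_zero_of_pos)
  have "0 = poly p (- real i0 - 1)" using p0 by simp
  also have "\<dots> = (\<Sum>i<n. if i = i0 then c i0 * (\<Prod>k\<in>{..<n} - {i0}. real k - real i0) else 0)"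
    unfolding pp
  proof (rule sum.cong[OF refl])
    fix i assume i: "i \<in> {..<n}"
    show "c i * (\<Prod>k\<in>{..<n} - {i}. real k + 1 + (- real i0 - 1)) =
      (if i = i0 then c i0 * (\<Prod>k\<in>{..<n} - {i0}. real k - real i0) else 0)"
    proof (cases "i = i0")
      case False
      hence "i0 \<in> {..<n} - {i}" using i0 by auto
      hence "(\<Prod>k\<in>{..<n} - {i}. real k + 1 + (- real i0 - 1)) = 0"
        by (intro prod_zero bexI[of _ i0]) auto
      thus ?thesis using False by simp
    qed simp
  qed
  also have "\<dots> = c i0 * (\<Prod>k\<in>{..<n} - {i0}. real k - real i0)" using i0 by simp
  finally have "c i0 * (\<Prod>k\<in>{..<n} - {i0}. real k - real i0) = 0" by simp
  moreover have "(\<Prod>k\<in>{..<n} - {i0}. real k - real i0) \<noteq> 0" by (simp add: prod_zero_iff)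
  ultimately show ?thesis by simp
qed

lemma pf2: fixes c :: "nat \<Rightarrow> real"
  assumes h: "\<And>s. s > 0 \<Longrightarrow> (\<Sum>i<n. c i * s ^ (n - 1 - i)) = 0" and i0: "i0 < n"
  shows "c i0 = 0"
proof -
  define p where "p = (\<Sum>i<n. monom (c i) (n - 1 - i))"
  have "poly p s = 0" if "s > 0" for s using h[OF that] unfolding p_def by (simp add: poly_sum poly_monom)
  hence p0: "p = 0" by (rule poly_zero_of_pos)
  have "0 = coeff p (n - 1 - i0)" using p0 by simp
  also have "\<dots> = (\<Sum>i<n. if i = i0 then c i0 else 0)"
    unfolding p_def coeff_sum
  proof (rule sum.cong[OF refl])
    fix i assume "i \<in> {..<n}"
    thus "coeff (monom (c i) (n - 1 - i)) (n - 1 - i0) = (if i = i0 then c i0 else 0)"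
      using i0 by (auto simp: coeff_monom)
  qed
  also have "\<dots> = c i0" using i0 by simp
  finally show ?thesis by simp
qed

lemma cont_zero: fixes G :: "real \<Rightarrow> real"
  assumes c: "isCont G 0" and z: "\<And>s. s > 0 \<Longrightarrow> G s = 0"
  shows "G 0 = 0"
proof -
  have 1: "(G \<longlongrightarrow> G 0) (at_right 0)" using c by (simp add: isCont_def filterlim_at_split)
  have "eventually (\<lambda>s. G s = 0) (at_right (0::real))"
    by (rule eventually_at_rightI[of 0 1]) (auto intro: z)
  hence 2: "(G \<longlongrightarrow> 0) (at_right 0)" by (rule tendsto_eventually)
  show ?thesis using tendsto_unique[OF trivial_limit_at_right_real 1 2] .
qed

lemma isCont_pow_c: "isCont (\<lambda>s::real. s ^ k * c) s0"
  by (intro continuous_intros)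

lemma isCont_Linv[continuous_intros]: "isCont (\<lambda>s. Linv x1 s x3 i j) s0"
proof (cases "j \<le> i")
  case True
  have "(\<lambda>s. Linv x1 s x3 i j) = (\<lambda>s. s ^ (i - j) * (1 / (\<Prod>k\<in>{j..i}. ell x1 x3 k)))"
    using True unfolding Linv_def by auto
  thus ?thesis using isCont_pow_c[where k="i - j" and c="1 / (\<Prod>k\<in>{j..i}. ell x1 x3 k)"] by (simp only:)
next
  case False thus ?thesis unfolding Linv_def by simp
qed

lemma isCont_qv[continuous_intros]: "isCont (\<lambda>s. qv x1 s x3 i) s0"
  unfolding qv_def by (auto intro!: continuous_intros)

lemma ell_pos: "x1 \<ge> 0 \<Longrightarrow> x3 > 0 \<Longrightarrow> ell x1 x3 k > 0"
  unfolding ell_def by (simp add: add_nonneg_pos)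

lemma Linv_nonneg: "x1 \<ge> 0 \<Longrightarrow> x2 \<ge> 0 \<Longrightarrow> x3 > 0 \<Longrightarrow> Linv x1 x2 x3 i j \<ge> 0"
  unfolding Linv_def using ell_pos[of x1 x3] by (auto intro!: divide_nonneg_pos prod_pos zero_le_power)

lemma qv_nonneg: "x1 \<ge> 0 \<Longrightarrow> x2 \<ge> 0 \<Longrightarrow> x3 > 0 \<Longrightarrow> qv x1 x2 x3 i \<ge> 0"
  unfolding qv_def by (auto intro!: sum_nonneg Linv_nonneg)

lemma Linv_x2_0: "Linv x1 0 x3 i j = (if i = j then 1 / ell x1 x3 i else 0)"
  unfolding Linv_def by auto

lemma qv_x2_0: "qv x1 0 x3 i = 1 / ell x1 x3 i"
  unfolding qv_def Linv_x2_0 by simp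



definition bb :: "nat \<Rightarrow> real \<Rightarrow> real \<Rightarrow> real \<Rightarrow> nat \<Rightarrow> nat \<Rightarrow> real" where
  "bb n x1 x2 x3 j i = Linv x1 x2 x3 j i - x2 * qv x1 x2 x3 j * Linv x1 x2 x3 (n - 1) i / sig n x1 x2 x3"

lemma sig_pos: "x1 \<ge> 0 \<Longrightarrow> x2 \<ge> 0 \<Longrightarrow> x3 > 0 \<Longrightarrow> sig n x1 x2 x3 > 0"
  unfolding sig_def using qv_nonneg[of x1 x2 x3] by (simp add: add_pos_nonneg)

lemma ell_1: "ell 1 t k = real k + 1 + t" by (simp add: ell_def)
lemma ell_0: "ell 0 1 k = 1" by (simp add: ell_def)

lemma core:
  assumes n: "n \<ge> 1"
  and H: "\<And>x1 x2 x3. (\<And>k. k < n \<Longrightarrow> ell x1 x3 k \<noteq> 0) \<Longrightarrow> sig n x1 x2 x3 \<noteq> 0 \<Longrightarrow>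
     (\<Sum>i<n. \<Sum>j\<le>i. du i j * x1 * bb n x1 x2 x3 j i) + (\<Sum>i<n. dv i * x2 * bb n x1 x2 x3 (n - 1) i) = 0"
  shows "\<forall>i<n. \<forall>j\<le>i. du i j = 0" "\<forall>i<n. dv i = 0"
proof -
  have Hp: "(\<Sum>i<n. \<Sum>j\<le>i. du i j * x1 * bb n x1 x2 x3 j i) + (\<Sum>i<n. dv i * x2 * bb n x1 x2 x3 (n - 1) i) = 0"
    if "x1 \<ge> 0" "x2 \<ge> 0" "x3 > 0" for x1 x2 x3
    using H[of x1 x3 x2] ell_pos[OF that(1,3)] sig_pos[OF that] by (metis less_irrefl)
  have diag: "du i i = 0" if i: "i < n" for i
  proof (rule pf1[OF _ i])
    fix t :: real assume t: "t > 0"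
    have "0 = (\<Sum>i<n. \<Sum>j\<le>i. du i j * 1 * bb n 1 0 t j i) + (\<Sum>i<n. dv i * 0 * bb n 1 0 t (n - 1) i)"
      using Hp[of 1 0 t] t by simp
    also have "\<dots> = (\<Sum>i<n. \<Sum>j\<le>i. du i j * bb n 1 0 t j i)" by simp
    also have "\<dots> = (\<Sum>i<n. \<Sum>j\<le>i. if j = i then du i i / (real i + 1 + t) else 0)"
      by (intro sum.cong refl) (auto simp: bb_def Linv_x2_0 ell_1)
    also have "\<dots> = (\<Sum>i<n. du i i / (real i + 1 + t))" by simp
    finally show "(\<Sum>i<n. du i i / (real i + 1 + t)) = 0" by simp
  qed
  have vz: "dv i = 0" if i: "i < n" for i
  proof (rule pf2[OF _ i])
    fix s :: real assume s: "s > 0"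
    have sg: "sig n 0 s 1 > 0" using sig_pos[of 0 s 1] s by simp
    have L: "Linv 0 s 1 (n - 1) i = s ^ (n - 1 - i)" if "i < n" for i
      using that by (simp add: Linv_def ell_0)
    have "0 = (\<Sum>i<n. \<Sum>j\<le>i. du i j * 0 * bb n 0 s 1 j i) + (\<Sum>i<n. dv i * s * bb n 0 s 1 (n - 1) i)"
      using Hp[of 0 s 1] s by simp
    also have "\<dots> = (\<Sum>i<n. dv i * s * (s ^ (n - 1 - i) / sig n 0 s 1))"
    proof -
      have "bb n 0 s 1 (n - 1) i = s ^ (n - 1 - i) / sig n 0 s 1" if "i < n" for i
      proof -
        have "1 - s * qv 0 s 1 (n - 1) / sig n 0 s 1 = 1 / sig n 0 s 1"
          using sg unfolding sig_def by (simp add: field_simps)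
        moreover have "bb n 0 s 1 (n - 1) i = Linv 0 s 1 (n - 1) i * (1 - s * qv 0 s 1 (n - 1) / sig n 0 s 1)"
          unfolding bb_def by (simp add: right_diff_distrib)
        ultimately show ?thesis unfolding L[OF that] by simp
      qed
      thus ?thesis by simp
    qed
    also have "\<dots> = s / sig n 0 s 1 * (\<Sum>i<n. dv i * s ^ (n - 1 - i))"
      by (simp add: sum_distrib_left field_simps)
    finally show "(\<Sum>i<n. dv i * s ^ (n - 1 - i)) = 0" using s sg by simp
  qed
  define K where "K s t = (\<Sum>i<n. \<Sum>j<i. du i j * qv 1 s t j * Linv 1 s t (n - 1) i)" for s t
  have Kz: "K s t = 0" if s: "s > 0" and t: "t > 0" for s t
  proof -
    have sg: "sig n 1 s t > 0" using sig_pos[of 1 s t] s t by simp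
    have "0 = (\<Sum>i<n. \<Sum>j\<le>i. du i j * 1 * bb n 1 s t j i) + (\<Sum>i<n. dv i * s * bb n 1 s t (n - 1) i)"
      using Hp[of 1 s t] s t by simp
    also have "\<dots> = (\<Sum>i<n. \<Sum>j\<le>i. du i j * bb n 1 s t j i)" using vz by simp
    also have "\<dots> = (\<Sum>i<n. \<Sum>j<i. du i j * (- s * qv 1 s t j * Linv 1 s t (n - 1) i / sig n 1 s t))"
    proof (rule sum.cong[OF refl])
      fix i assume i: "i \<in> {..<n}"
      have "(\<Sum>j\<le>i. du i j * bb n 1 s t j i) = (\<Sum>j<i. du i j * bb n 1 s t j i)"
        using diag[of i] i by (simp add: lessThan_Suc_atMost[symmetric])
      also have "\<dots> = (\<Sum>j<i. du i j * (- s * qv 1 s t j * Linv 1 s t (n - 1) i / sig n 1 s t))"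
        by (rule sum.cong[OF refl]) (auto simp: bb_def Linv_def)
      finally show "(\<Sum>j\<le>i. du i j * bb n 1 s t j i) = \<dots>" .
    qed
    also have "\<dots> = - s / sig n 1 s t * K s t"
      unfolding K_def by (simp add: sum_distrib_left field_simps)
    finally show ?thesis using s sg by simp
  qed
  have offd: "\<forall>i. n - k \<le> i \<longrightarrow> i < n \<longrightarrow> (\<forall>j<i. du i j = 0)" for k
  proof (induct k)
    case 0 thus ?case by auto
  next
    case (Suc k)
    show ?case
    proof (cases "k < n")
      case False thus ?thesis using Suc by auto
    next
      case True
      define m where "m = n - Suc k"
      have m: "m < n" "n - k = Suc m" using True unfolding m_def by auto
      have IH: "\<forall>i. Suc m \<le> i \<longrightarrow> i < n \<longrightarrow> (\<forall>j<i. du i j = 0)" using Suc m by simp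
      have "du m j = 0" if j: "j < m" for j
      proof (rule pf1[OF _ j])
        fix t :: real assume t: "t > 0"
        have lp: "ell 1 t k > 0" for k using ell_pos[of 1 t k] t by simp
        define P where "P i = (\<Prod>k\<in>{i..n-1}. ell 1 t k)" for i
        have Pp: "P i > 0" for i unfolding P_def using lp by (auto intro!: prod_pos)
        define G where "G s = (\<Sum>i<Suc m. \<Sum>j<i. du i j * qv 1 s t j * (s ^ (m - i) * (1 / P i)))" for s
        have KG: "K s t = s ^ (n - 1 - m) * G s" if s: "s > 0" for s
        proof -
          have "K s t = (\<Sum>i<Suc m. \<Sum>j<i. du i j * qv 1 s t j * Linv 1 s t (n - 1) i)"
            unfolding K_def using IH m by (intro sum.mono_neutral_right) auto
          also have "\<dots> = (\<Sum>i<Suc m. \<Sum>j<i. s ^ (n - 1 - m) * (du i j * qv 1 s t j * (s ^ (m - i) * (1 / P i))))"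
          proof (intro sum.cong refl)
            fix i j assume i: "i \<in> {..<Suc m}"
            have "s ^ (n - 1 - i) = s ^ (n - 1 - m) * s ^ (m - i)" using i m
              by (simp add: power_add[symmetric])
            thus "du i j * qv 1 s t j * Linv 1 s t (n - 1) i = s ^ (n - 1 - m) * (du i j * qv 1 s t j * (s ^ (m - i) * (1 / P i)))"
              using i m unfolding Linv_def P_def by simp
          qed
          also have "\<dots> = s ^ (n - 1 - m) * G s" unfolding G_def by (simp only: sum_distrib_left)
          finally show ?thesis .
        qed
        have Gz: "G s = 0" if "s > 0" for s using KG[OF that] Kz[OF that t] that by simp
        have Gc: "isCont G 0" unfolding G_def by (intro continuous_intros)
        have "G 0 = 0" by (rule cont_zero[OF Gc Gz])
        moreover have "G 0 = (\<Sum>j<m. du m j / (real j + 1 + t)) / P m"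
        proof -
          have "G 0 = (\<Sum>i<Suc m. if i = m then (\<Sum>j<m. du m j / ell 1 t j) / P m else 0)"
            unfolding G_def
          proof (intro sum.cong refl)
            fix i assume i: "i \<in> {..<Suc m}"
            show "(\<Sum>j<i. du i j * qv 1 0 t j * (0 ^ (m - i) * (1 / P i))) =
              (if i = m then (\<Sum>j<m. du m j / ell 1 t j) / P m else 0)"
              using i by (auto simp: qv_x2_0 sum_divide_distrib power_0_left)
          qed
          also have "\<dots> = (\<Sum>j<m. du m j / (real j + 1 + t)) / P m" by (simp add: ell_1)
          finally show ?thesis .
        qed
        ultimately show "(\<Sum>j<m. du m j / (real j + 1 + t)) = 0" using Pp[of m] by simp
      qed
      hence dm: "\<forall>j<m. du m j = 0" by blast
      show ?thesis unfolding m_def[symmetric]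
      proof (intro allI impI)
        fix i j assume "m \<le> i" "i < n" "j < i"
        thus "du i j = 0" using dm IH by (cases "i = m") auto
      qed
    qed
  qed
  show "\<forall>i<n. \<forall>j\<le>i. du i j = 0"
  proof (intro allI impI)
    fix i j assume i: "i < n" and j: "j \<le> i"
    show "du i j = 0"
    proof (cases "j = i")
      case True thus ?thesis using diag i by simp
    next
      case False thus ?thesis using offd[of n] i j by simp
    qed
  qed
  show "\<forall>i<n. dv i = 0" using vz by simp
qed



lemma homog_pow: "homog d P \<Longrightarrow> homog (k * d) (P ^ k)"
proof (induct k)
  case 0 thus ?case by simp
next
  case (Suc k) thus ?case using homog_mult[of d P "k * d" "P ^ k"] by simp
qed

lemma pencil_dim[simp]: "dim_row (pencil n w) = n" "dim_col (pencil n w) = n" by (simp_all add: pencil_def)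

lemma homog_pencil_entry: "i < n \<Longrightarrow> j < n \<Longrightarrow> homog 1 (pencil n w $$ (i,j))"
proof -
  assume ij: "i < n" "j < n"
  have h0: "homog 0 (if i = j then 1 else 0 :: tripoly)" by simp
  show ?thesis unfolding pencil_index[OF ij]
    using homog_mult[OF homog_X1 homog_constP] homog_mult[OF homog_X2 homog_constP] homog_mult[OF homog_X3 h0]
    by (auto intro!: homog_add)
qed

lemma homog_cofactor: assumes n: "n \<ge> 1" "i < n" "j < n" shows "homog (n - 1) (cofactor (pencil n w) i j)"
proof -
  have c: "mat_delete (pencil n w) i j \<in> carrier_mat (n - 1) (n - 1)"
    using mat_delete_carrier[OF pencil_carrier] by blast
  have "homog (n - 1) (det (mat_delete (pencil n w) i j))"
  proof (rule homog_det[OF c])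
    fix a b assume "a < n - 1" "b < n - 1"
    show "homog 1 (mat_delete (pencil n w) i j $$ (a, b))"
    proof -
      have he: "\<And>a b. a < n \<Longrightarrow> b < n \<Longrightarrow> homog (Suc 0) (pencil n w $$ (a,b))"
        using homog_pencil_entry by simp
      show ?thesis using \<open>a < n - 1\<close> \<open>b < n - 1\<close> unfolding mat_delete_def by (auto intro!: he)
    qed
  qed
  moreover have "homog 0 ((-1 :: tripoly) ^ (i + j))"
    using homog_pow[OF homog_uminus[OF homog_one], of "i + j"] by simp
  ultimately show ?thesis unfolding cofactor_def using homog_mult by fastforce
qed

lemma homog_Du: "n \<ge> 1 \<Longrightarrow> i < n \<Longrightarrow> j < n \<Longrightarrow> homog n (Du n w i j)"
  unfolding Du_def using homog_mult[OF homog_X1 homog_cofactor] by fastforce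
lemma homog_Dv: "n \<ge> 1 \<Longrightarrow> i < n \<Longrightarrow> homog n (Dv n w i)"
  unfolding Dv_def using homog_mult[OF homog_X2 homog_cofactor[of n i "n - 1"]] by fastforce

lemma homog_constP_mult: "homog d P \<Longrightarrow> homog d (constP c * P)"
  using homog_mult[OF homog_constP] by fastforce

lemma monoms_mem: assumes "a + b + c = n" "c \<noteq> n" shows "(a, b, c) \<in> set (monoms n)"
proof -
  have 1: "a < Suc n" "b < Suc (n - a)" "c = n - a - b" using assms by auto
  have "(a, b, c) \<in> set (map (\<lambda>b. (a, b, n - a - b)) [0..<Suc (n - a)])" using 1 by auto
  hence "(a, b, c) \<in> set (concat (map (\<lambda>a. map (\<lambda>b. (a, b, n - a - b)) [0..<Suc (n - a)]) [0..<Suc n]))"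
    using 1(1) by (auto simp del: upt_Suc)
  thus ?thesis unfolding monoms_def using assms by (simp del: upt_Suc)
qed

lemma length_monoms: "length (monoms n) = numParams n"
proof -
  let ?f = "\<lambda>a. map (\<lambda>b. (a, b, n - a - b)) [0..<Suc (n - a)]"
  let ?P = "\<lambda>(a::nat, b::nat, c::nat). c \<noteq> n"
  have "length (monoms n) = (\<Sum>a\<leftarrow>[0..<Suc n]. length (filter ?P (?f a)))"
    unfolding monoms_def by (simp add: filter_concat length_concat comp_def)
  also have "\<dots> = (\<Sum>a<Suc n. length (filter ?P (?f a)))"
    by (simp only: interv_sum_list_conv_sum_set_nat set_upt atLeast0LessThan)
  also have "\<dots> = (\<Sum>a<Suc n. if a = 0 then n else Suc (n - a))"
  proof (rule sum.cong[OF refl])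
    fix a assume a: "a \<in> {..<Suc n}"
    show "length (filter ?P (?f a)) = (if a = 0 then n else Suc (n - a))"
    proof (cases "a = 0")
      case True
      have "filter ?P (?f a) = map (\<lambda>b. (a, b, n - a - b)) (filter (\<lambda>b. n - b \<noteq> n) [0..<Suc n])"
        using True by (simp add: filter_map comp_def del: upt_Suc)
      also have "filter (\<lambda>b. n - b \<noteq> n) [0..<Suc n] = [1..<Suc n]"
      proof -
        have "[0..<Suc n] = 0 # [1..<Suc n]" by (simp add: upt_conv_Cons del: upt_Suc)
        moreover have "filter (\<lambda>b. n - b \<noteq> n) [1..<Suc n] = [1..<Suc n]"
          by (rule filter_True) auto
        ultimately show ?thesis by simp
      qed
      finally show ?thesis using True by simp
    next
      case False
      have "filter ?P (?f a) = ?f a" using False a by (auto intro!: filter_True)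
      thus ?thesis using False by simp
    qed
  qed
  also have "\<dots> = n + (\<Sum>a\<in>{1..n}. Suc (n - a))"
  proof -
    have "{..<Suc n} = insert 0 {1..n}" by auto
    thus ?thesis by (simp add: sum.insert)
  qed
  also have "(\<Sum>a\<in>{1..n}. Suc (n - a)) = n * (n + 1) div 2"
  proof (induct n)
    case 0 thus ?case by simp
  next
    case (Suc n)
    have "(\<Sum>a\<in>{1..Suc n}. Suc (Suc n - a)) = (\<Sum>a\<in>{1..n}. Suc (Suc n - a)) + 1" by simp
    also have "(\<Sum>a\<in>{1..n}. Suc (Suc n - a)) = (\<Sum>a\<in>{1..n}. Suc (n - a) + 1)"
      by (rule sum.cong) auto
    also have "\<dots> = (\<Sum>a\<in>{1..n}. Suc (n - a)) + n" by (simp only: sum.distrib) simp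
    finally show ?case using Suc tri_Suc[of n] by simp
  qed
  finally show ?thesis using numParams_eq[of n] by simp
qed



lemma mat_delete_map: "mat_delete (map_mat f A) i j = map_mat f (mat_delete A i j)"
proof (rule eq_matI)
  fix a b assume a: "a < dim_row (map_mat f (mat_delete A i j))" and b: "b < dim_col (map_mat f (mat_delete A i j))"
  have "(if a < i then a else Suc a) < dim_row A" "(if b < j then b else Suc b) < dim_col A"
    using a b by (auto simp: mat_delete_def)
  thus "mat_delete (map_mat f A) i j $$ (a, b) = map_mat f (mat_delete A i j) $$ (a, b)"
    using a b unfolding mat_delete_def by simp
qed (auto simp: mat_delete_def)

lemma ev_cofactor: "ev x1 x2 x3 (cofactor A i j) = cofactor (map_mat (ev x1 x2 x3) A) i j"
  unfolding cofactor_def mat_delete_map ev_hom.hom_det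
  by (simp add: ev_hom.hom_mult ev_hom.hom_power ev_hom.hom_uminus)

definition w0 :: "nat \<Rightarrow> nat \<Rightarrow> real" where
  "w0 n k = (\<Sum>i<n. if k = tri i i then real i + 1 else 0) + (if base n \<le> k then 1 else 0)"

lemma w0_u: assumes "j \<le> i" "i < n" shows "w0 n (tri i j) = (if j = i then real i + 1 else 0)"
proof -
  have "(\<Sum>i'<n. if tri i j = tri i' i' then real i' + 1 else 0) = (\<Sum>i'<n. if i' = i then (if j = i then real i + 1 else 0) else 0)"
  proof (rule sum.cong[OF refl])
    fix i' assume "i' \<in> {..<n}"
    show "(if tri i j = tri i' i' then real i' + 1 else 0) = (if i' = i then (if j = i then real i + 1 else 0) else 0)"
      using tri_inj[of j i i' i'] assms by auto
  qed
  thus ?thesis using tri_less[OF assms] assms unfolding w0_def by simp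
qed

lemma w0_v: "w0 n (base n + i) = 1"
proof -
  have "(\<Sum>i'<n. if base n + i = tri i' i' then real i' + 1 else 0) = 0"
    by (rule sum.neutral) (use tri_less[of _ _ n] in fastforce)
  thus ?thesis unfolding w0_def by simp
qed

lemma ev_pencil: "map_mat (ev x1 x2 x3) (pencil n (w0 n)) = Am n x1 x2 x3"
proof (rule eq_matI)
  fix i j assume "i < dim_row (Am n x1 x2 x3)" "j < dim_col (Am n x1 x2 x3)"
  hence ij: "i < n" "j < n" by auto
  have u: "(if j \<le> i then w0 n (tri i j) else 0) = (if i = j then real i + 1 else 0)"
    using w0_u[of j i n] ij by auto
  have e: "map_mat (ev x1 x2 x3) (pencil n (w0 n)) $$ (i, j) = ev x1 x2 x3 (pencil n (w0 n) $$ (i, j))"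
    using ij by simp
  show "map_mat (ev x1 x2 x3) (pencil n (w0 n)) $$ (i, j) = Am n x1 x2 x3 $$ (i, j)"
    unfolding e pencil_index[OF ij] u w0_v
    using ij by (simp add: ev_hom.hom_add ev_hom.hom_mult Am_def ell_def algebra_simps)
qed auto

lemma jacobian_carrier: "jacobian n w \<in> carrier_mat (numParams n) (numParams n)"
  by (simp add: jacobian_def)

lemma mcoeff_add: "mcoeff (P + Q) m = mcoeff P m + mcoeff Q m" by (simp add: mcoeff_def split: prod.splits)
lemma mcoeff_sum: "mcoeff (sum f S) m = (\<Sum>x\<in>S. mcoeff (f x) m)"
  by (simp add: mcoeff_def tcoeff_sum split: prod.splits)
lemma mcoeff_constP: "mcoeff (constP c * P) m = c * mcoeff P m" by (simp add: mcoeff_def split: prod.splits)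



lemma sum_params: "(\<Sum>k<numParams n. f k) = (\<Sum>i<n. \<Sum>j\<le>i. f (tri i j)) + (\<Sum>i<n. f (base n + i))"
  unfolding numParams_eq sum_split_add sum_tri ..

theorem mainTheorem13:
  fixes n :: nat
  assumes "n \<ge> 1"
  shows "\<exists>w :: nat \<Rightarrow> real. det (jacobian n w) \<noteq> 0"
proof
  let ?w = "w0 n" and ?N = "numParams n"
  let ?J = "jacobian n ?w"
  show "det ?J \<noteq> 0"
  proof
    assume "det ?J = 0"
    then obtain v where v: "v \<in> carrier_vec ?N" "v \<noteq> 0\<^sub>v ?N" "?J *\<^sub>v v = 0\<^sub>v ?N"
      using det_0_iff_vec_prod_zero[OF jacobian_carrier] by blast
    define du where "du i j = v $ tri i j" for i j
    define dv where "dv i = v $ (base n + i)" for i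
    define \<Phi> where "\<Phi> = (\<Sum>i<n. \<Sum>j\<le>i. constP (du i j) * Du n ?w i j) + (\<Sum>i<n. constP (dv i) * Dv n ?w i)"
    have coef: "mcoeff \<Phi> (monoms n ! r) = 0" if r: "r < ?N" for r
    proof -
      let ?m = "monoms n ! r"
      have "0 = (?J *\<^sub>v v) $ r" using v(3) r by simp
      also have "\<dots> = (\<Sum>k<?N. ?J $$ (r, k) * v $ k)"
        using r v(1) jacobian_carrier[of n ?w]
        by (simp add: scalar_prod_def atLeast0LessThan)
      also have "\<dots> = (\<Sum>i<n. \<Sum>j\<le>i. ?J $$ (r, tri i j) * du i j) + (\<Sum>i<n. ?J $$ (r, base n + i) * dv i)"
        unfolding sum_params du_def dv_def ..
      also have "\<dots> = (\<Sum>i<n. \<Sum>j\<le>i. du i j * mcoeff (Du n ?w i j) ?m) + (\<Sum>i<n. dv i * mcoeff (Dv n ?w i) ?m)"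
        using jac_u[OF _ _ r] jac_v[OF _ r] by (auto intro!: sum.cong arg_cong2[where f="(+)"])
      also have "\<dots> = mcoeff \<Phi> ?m"
        unfolding \<Phi>_def mcoeff_add mcoeff_sum mcoeff_constP ..
      finally show ?thesis by simp
    qed
    have hom: "homog n \<Phi>"
      unfolding \<Phi>_def using assms
      by (auto intro!: homog_add homog_sum homog_constP_mult homog_Du homog_Dv)
    have c0: "tcoeff \<Phi> 0 0 n = 0"
      unfolding \<Phi>_def Du_def Dv_def by (simp add: tcoeff_sum tcoeff_X1_mult0 tcoeff_X2_mult0)
    have \<Phi>0: "\<Phi> = 0"
    proof (rule tripoly_eqI)
      fix a b c
      show "tcoeff \<Phi> a b c = tcoeff 0 a b c"
      proof (cases "a + b + c = n")
        case False thus ?thesis using hom unfolding homog_def by (auto simp: tcoeff_def)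
      next
        case True
        show ?thesis
        proof (cases "c = n")
          case True
          hence "a = 0" "b = 0" using \<open>a + b + c = n\<close> by auto
          thus ?thesis using c0 True by (simp add: tcoeff_def)
        next
          case False
          have "(a, b, c) \<in> set (monoms n)" by (rule monoms_mem[OF \<open>a + b + c = n\<close> False])
          then obtain r where r: "r < length (monoms n)" "monoms n ! r = (a, b, c)"
            by (auto simp: in_set_conv_nth)
          have "r < ?N" using r(1) length_monoms[of n] by simp
          hence "mcoeff \<Phi> (monoms n ! r) = 0" by (rule coef)
          thus ?thesis using r by (simp add: mcoeff_def tcoeff_def)
        qed
      qed
    qed
    have Hc: "(\<Sum>i<n. \<Sum>j\<le>i. du i j * x1 * bb n x1 x2 x3 j i) + (\<Sum>i<n. dv i * x2 * bb n x1 x2 x3 (n - 1) i) = 0"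
      if l: "\<And>k. k < n \<Longrightarrow> ell x1 x3 k \<noteq> 0" and s: "sig n x1 x2 x3 \<noteq> 0" for x1 x2 x3
    proof -
      let ?A = "Am n x1 x2 x3"
      have cof: "ev x1 x2 x3 (cofactor (pencil n ?w) i j) = det ?A * bb n x1 x2 x3 j i" if "i < n" "j < n" for i j
      proof -
        have "ev x1 x2 x3 (cofactor (pencil n ?w) i j) = cofactor ?A i j" unfolding ev_cofactor ev_pencil ..
        also have "\<dots> = det ?A * Bm n x1 x2 x3 $$ (j, i)" by (rule cofactor_Am(1)[OF assms l s that])
        also have "Bm n x1 x2 x3 $$ (j, i) = bb n x1 x2 x3 j i" using that by (simp add: Bm_def bb_def)
        finally show ?thesis .
      qed
      have dA: "det ?A \<noteq> 0" using cofactor_Am(2)[OF assms l s, of 0 0] assms by simp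
      have "0 = ev x1 x2 x3 \<Phi>" using \<Phi>0 by simp
      also have "\<dots> = (\<Sum>i<n. \<Sum>j\<le>i. du i j * (x1 * (det ?A * bb n x1 x2 x3 j i))) +
          (\<Sum>i<n. dv i * (x2 * (det ?A * bb n x1 x2 x3 (n - 1) i)))"
        unfolding \<Phi>_def Du_def Dv_def
        using assms by (simp add: ev_hom.hom_add ev_hom.hom_sum ev_hom.hom_mult cof)
      also have "\<dots> = det ?A * ((\<Sum>i<n. \<Sum>j\<le>i. du i j * x1 * bb n x1 x2 x3 j i) + (\<Sum>i<n. dv i * x2 * bb n x1 x2 x3 (n - 1) i))"
        by (simp add: sum_distrib_left algebra_simps)
      finally show ?thesis using dA by simp
    qed
    have duz: "\<forall>i<n. \<forall>j\<le>i. du i j = 0" and dvz: "\<forall>i<n. dv i = 0"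
      using core[OF assms Hc] by blast+
    have "(\<Sum>k<?N. (v $ k)\<^sup>2) = (\<Sum>i<n. \<Sum>j\<le>i. (du i j)\<^sup>2) + (\<Sum>i<n. (dv i)\<^sup>2)"
      unfolding sum_params du_def dv_def ..
    also have "\<dots> = 0" using duz dvz by simp
    finally have "\<forall>k\<in>{..<?N}. (v $ k)\<^sup>2 = 0" by (subst sum_nonneg_eq_0_iff[symmetric]) auto
    hence "v = 0\<^sub>v ?N" using v(1) by (intro eq_vecI) auto
    thus False using v(2) by simp
  qed
qed



end
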